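(* Let $Q\subset\mathbb{R}^N$ be a convex polytope and $\phi:Q\to\mathbb{R}_+$ a distribution density function. For $P=(p_1,\dots,p_n)\in Q^n$ let $V_i(P)$ be the Voronoi cell of $p_i$ in $Q$ and $C_{V_i(P)}$ its centroid with respect to $\phi$. Let $T:Q^n\to Q^n$ be a continuous map with components $T_i$ satisfying: (a) for all $i\in\{1,\dots,n\}$, $\|T_i(P)-C_{V_i(P)}\|\le\|p_i-C_{V_i(P)}\|$; (b) if $P$ is not a centroidal Voronoi configuration, then there exists $j$ with $\|T_j(P)-C_{V_j(P)}\|<\|p_j-C_{V_j(P)}\|$. Let $P_0\in Q^n$. Then the sequence $\{T^m(P_0)\}_{m\ge1}$ converges to the set of centroidal Voronoi configurations. If this set is finite, then $\{T^m(P_0)\}_{m\ge1}$ converges to a centroidal Voronoi configuration.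
   Context: $\|\cdot\|$ is the Euclidean norm. The Voronoi cell of $p_i$ is $V_i(P)=\{q\in Q:\|q-p_i\|\le\|q-p_j\|\ \forall j\ne i\}$, and its centroid is $C_{V_i(P)}=\big(\int_{V_i(P)}\phi(q)\,dq\big)^{-1}\int_{V_i(P)}q\,\phi(q)\,dq$. A configuration $P$ is a centroidal Voronoi configuration if $p_i=C_{V_i(P)}$ for all $i$. $T^m$ denotes the $m$-fold composition of $T$. *)

theory Defs
  imports "HOL-Analysis.Analysis"
begin

definition config_space :: "'a set \<Rightarrow> ('a ^ 'n) set" where
  "config_space Q = {P. \<forall>i. P $ i \<in> Q}"

definition voronoi_cell :: "'a::real_normed_vector set \<Rightarrow> 'a ^ 'n \<Rightarrow> 'n \<Rightarrow> 'a set" where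
  "voronoi_cell Q P i = {q \<in> Q. \<forall>j. j \<noteq> i \<longrightarrow> norm (q - P $ i) \<le> norm (q - P $ j)}"

definition centroid :: "('a::euclidean_space \<Rightarrow> real) \<Rightarrow> 'a set \<Rightarrow> 'a" where
  "centroid \<phi> V = inverse (integral V \<phi>) *\<^sub>R integral V (\<lambda>q. \<phi> q *\<^sub>R q)"

definition centroidal_voronoi :: "'a::euclidean_space set \<Rightarrow> ('a \<Rightarrow> real) \<Rightarrow> 'a ^ 'n \<Rightarrow> bool" where
  "centroidal_voronoi Q \<phi> P \<longleftrightarrow> (\<forall>i. P $ i = centroid \<phi> (voronoi_cell Q P i))"

end

theory Submission
  imports Defs
begin

lemma ai_subset:
  fixes f :: "'a::euclidean_space \<Rightarrow> 'b::euclidean_space"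
  assumes "f absolutely_integrable_on S" "T \<in> sets lebesgue" "T \<subseteq> S"
  shows "f absolutely_integrable_on T"
  using assms set_integrable_subset by blast

lemma phi_prod_ai:
  fixes \<phi> :: "'a::euclidean_space \<Rightarrow> real"
  assumes Qc: "compact Q" and phi: "\<phi> integrable_on Q" "\<forall>q\<in>Q. 0 \<le> \<phi> q"
    and V: "V \<subseteq> Q" "closed V" and g: "continuous_on Q g"
  shows "(\<lambda>q. g q * \<phi> q) absolutely_integrable_on V"
proof -
  have a: "\<phi> absolutely_integrable_on Q"
    using phi nonnegative_absolutely_integrable_1 by blast
  have Vl: "V \<in> sets lebesgue" using V by (simp add: borel_closed)
  have aV: "\<phi> absolutely_integrable_on V" using ai_subset[OF a Vl V(1)] .
  have cV: "compact V" using V Qc compact_Int_closed inf.absorb_iff2 by metis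
  have gV: "continuous_on V g" using g V continuous_on_subset by blast
  show ?thesis
  proof (rule absolutely_integrable_bounded_measurable_product[OF bilinear_times _ Vl _ aV])
    show "g \<in> borel_measurable (lebesgue_on V)"
      using continuous_imp_measurable_on_sets_lebesgue[OF gV Vl] .
    show "bounded (g ` V)" using compact_continuous_image[OF gV cV] compact_imp_bounded by blast
  qed
qed

lemma phi_vec_ai:
  fixes \<phi> :: "'a::euclidean_space \<Rightarrow> real"
  assumes Qc: "compact Q" and phi: "\<phi> integrable_on Q" "\<forall>q\<in>Q. 0 \<le> \<phi> q"
    and V: "V \<subseteq> Q" "closed V"
  shows "(\<lambda>q. \<phi> q *\<^sub>R q) absolutely_integrable_on V"
proof -
  have a: "\<phi> absolutely_integrable_on Q"
    using phi nonnegative_absolutely_integrable_1 by blast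
  have Vl: "V \<in> sets lebesgue" using V by (simp add: borel_closed)
  have aV: "\<phi> absolutely_integrable_on V" using ai_subset[OF a Vl V(1)] .
  have cV: "compact V" using V Qc compact_Int_closed inf.absorb_iff2 by metis
  have bl: "bilinear (\<lambda>(x::'a) (c::real). c *\<^sub>R x)"
    unfolding bilinear_def by (auto intro!: linearI simp: algebra_simps)
  have "(\<lambda>q. (\<lambda>x c. c *\<^sub>R x) ((\<lambda>x. x) q) (\<phi> q)) absolutely_integrable_on V"
  proof (rule absolutely_integrable_bounded_measurable_product[OF bl _ Vl _ aV])
    show "(\<lambda>x. x) \<in> borel_measurable (lebesgue_on V)"
      using continuous_imp_measurable_on_sets_lebesgue[OF continuous_on_id Vl] by simp
    show "bounded ((\<lambda>x. x) ` V)" using cV compact_imp_bounded by simp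
  qed
  then show ?thesis by simp
qed

lemma pos_integral:
  fixes \<phi> :: "'a::euclidean_space \<Rightarrow> real"
  assumes "\<phi> integrable_on B" "\<forall>x\<in>B. 0 < \<phi> x" "B \<in> sets lebesgue" "\<not> negligible B"
  shows "integral B \<phi> > 0"
proof -
  have a: "\<phi> absolutely_integrable_on B"
    using assms nonnegative_absolutely_integrable_1 less_imp_le by blast
  have i: "integrable (lebesgue_on B) \<phi>" using absolutely_integrable_imp_integrable[OF a assms(3)] .
  have eq: "integral\<^sup>L (lebesgue_on B) \<phi> = integral B \<phi>"
    using lebesgue_integral_eq_integral[OF i assms(3)] .
  have ge: "integral B \<phi> \<ge> 0" using integral_nonneg assms(1,2) less_imp_le by metis
  have ae: "AE x in lebesgue_on B. 0 \<le> \<phi> x"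
    using assms(2,3) by (auto intro!: AE_I2 simp: space_restrict_space less_imp_le)
  show ?thesis
  proof (rule ccontr)
    assume "\<not> ?thesis"
    then have "integral\<^sup>L (lebesgue_on B) \<phi> = 0" using ge eq by simp
    then have "AE x in lebesgue_on B. \<phi> x = 0" using integral_nonneg_eq_0_iff_AE[OF i ae] by simp
    moreover have "AE x in lebesgue_on B. \<phi> x \<noteq> 0"
      using assms(2,3) by (intro AE_I2) (fastforce simp: space_restrict_space)
    ultimately have "AE x in lebesgue_on B. False" by eventually_elim simp
    then obtain N where N: "{x \<in> space (lebesgue_on B). \<not> False} \<subseteq> N"
       "emeasure (lebesgue_on B) N = 0" "N \<in> sets (lebesgue_on B)"
      by (rule AE_E)
    then have "N \<in> null_sets (lebesgue_on B)" by (simp add: null_setsI)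
    then have "space (lebesgue_on B) \<in> null_sets (lebesgue_on B)"
      using null_sets_subset[OF \<open>N \<in> null_sets (lebesgue_on B)\<close> sets.top] N(1) by auto
    then have "B \<in> null_sets lebesgue"
      using assms(3) by (simp add: null_sets_restrict_space space_restrict_space)
    then show False using assms(4) negligible_iff_null_sets by blast
  qed
qed

definition sqd :: "('a::real_normed_vector) ^ 'n \<Rightarrow> 'a \<Rightarrow> real" where
  "sqd P q = (infdist q (range (\<lambda>i. P $ i)))\<^sup>2"

lemma infdist_le_pt: "infdist q (range (\<lambda>i. P $ i)) \<le> norm (q - P $ i)"
  by (metis dist_norm infdist_le rangeI)

lemma infdist_attain:
  fixes P :: "'a::euclidean_space ^ 'n"
  shows "\<exists>i. infdist q (range (\<lambda>i. P $ i)) = norm (q - P $ i)"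
proof -
  have "closed (range (\<lambda>i. P $ i))" by (simp add: finite_imp_closed)
  then obtain x where "x \<in> range (\<lambda>i. P $ i)" "infdist q (range (\<lambda>i. P $ i)) = dist q x"
  proof (rule infdist_attains_inf[of "range (\<lambda>i. P $ i)" q])
    show "range (\<lambda>i. P $ i) \<noteq> {}" by simp
  qed (use \<open>closed (range (\<lambda>i. P $ i))\<close> in auto)
  then obtain i where "x = P $ i" "infdist q (range (\<lambda>i. P $ i)) = dist q x" by blast
  then show ?thesis unfolding dist_norm by blast
qed

lemma vor_mem:
  fixes P :: "'a::euclidean_space ^ 'n"
  shows
  "q \<in> voronoi_cell Q P i \<longleftrightarrow> q \<in> Q \<and> norm (q - P $ i) = infdist q (range (\<lambda>i. P $ i))"
proof
  assume a: "q \<in> voronoi_cell Q P i"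
  obtain j where j: "infdist q (range (\<lambda>i. P $ i)) = norm (q - P $ j)" using infdist_attain[of q P] by blast
  have "norm (q - P $ i) \<le> norm (q - P $ j)"
  proof (cases "j = i")
    case False then show ?thesis using a unfolding voronoi_cell_def by blast
  qed simp
  moreover have "infdist q (range (\<lambda>i. P $ i)) \<le> norm (q - P $ i)" by (rule infdist_le_pt)
  moreover have "q \<in> Q" using a unfolding voronoi_cell_def by blast
  ultimately show "q \<in> Q \<and> norm (q - P $ i) = infdist q (range (\<lambda>i. P $ i))"
    using j by linarith
next
  assume h: "q \<in> Q \<and> norm (q - P $ i) = infdist q (range (\<lambda>i. P $ i))"
  have "norm (q - P $ i) \<le> norm (q - P $ j)" for j using h infdist_le_pt[of q P j] by linarith
  then show "q \<in> voronoi_cell Q P i" unfolding voronoi_cell_def using h by blast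
qed

lemma vor_sub: "voronoi_cell Q P i \<subseteq> Q" unfolding voronoi_cell_def by auto

lemma vor_closed:
  fixes P :: "'a::euclidean_space ^ 'n"
  assumes "closed Q" shows "closed (voronoi_cell Q P i)"
proof -
  have "voronoi_cell Q P i = Q \<inter> {q. norm (q - P $ i) = infdist q (range (\<lambda>i. P $ i))}"
    using vor_mem by auto
  moreover have "closed {q. norm (q - P $ i) = infdist q (range (\<lambda>i. P $ i))}"
    by (intro closed_Collect_eq continuous_intros)
  ultimately show ?thesis using assms by auto
qed

lemma nd: fixes a b :: "'a::real_inner" shows "norm (a - b)^2 = norm a ^2 - 2 * (a \<bullet> b) + norm b ^2"
  by (simp add: power2_norm_eq_inner inner_diff_left inner_diff_right inner_commute)

lemma cent_id:
  fixes \<phi> :: "'a::euclidean_space \<Rightarrow> real"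
  assumes Qc: "compact Q" and phi: "\<phi> integrable_on Q" "\<forall>q\<in>Q. 0 \<le> \<phi> q"
    and V: "V \<subseteq> Q" "closed V" and M: "integral V \<phi> > 0"
  shows "integral V (\<lambda>q. (norm (q - x)^2 - norm (q - p)^2) * \<phi> q)
     = integral V \<phi> * (norm (x - centroid \<phi> V)^2 - norm (p - centroid \<phi> V)^2)"
proof -
  define S where "S = integral V (\<lambda>q. \<phi> q *\<^sub>R q)"
  define c where "c = centroid \<phi> V"
  define a where "a = norm x ^2 - norm p ^2"
  have Sc: "S = integral V \<phi> *\<^sub>R c" using M unfolding c_def centroid_def S_def by simp
  have i1: "\<phi> integrable_on V"
    using phi_prod_ai[OF Qc phi V, of "\<lambda>_. 1"] set_lebesgue_integral_eq_integral(1) by auto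
  have i2: "(\<lambda>q. \<phi> q *\<^sub>R q) integrable_on V"
    using phi_vec_ai[OF Qc phi V] set_lebesgue_integral_eq_integral(1) by auto
  have i3: "(\<lambda>q. (\<phi> q *\<^sub>R q) \<bullet> (x - p)) integrable_on V"
    using integrable_linear[OF i2 bounded_linear_inner_left] by (simp add: o_def)
  have e3: "integral V (\<lambda>q. (\<phi> q *\<^sub>R q) \<bullet> (x - p)) = S \<bullet> (x - p)"
    using integral_linear[OF i2 bounded_linear_inner_left] unfolding S_def by (simp add: o_def)
  have pt: "(norm (q - x)^2 - norm (q - p)^2) * \<phi> q = a * \<phi> q - 2 * ((\<phi> q *\<^sub>R q) \<bullet> (x - p))" for q
    unfolding a_def nd[of q x] nd[of q p] inner_scaleR_left inner_diff_right by (simp add: algebra_simps)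
  have "integral V (\<lambda>q. (norm (q - x)^2 - norm (q - p)^2) * \<phi> q)
      = integral V (\<lambda>q. a * \<phi> q - 2 * ((\<phi> q *\<^sub>R q) \<bullet> (x - p)))" by (simp add: pt)
  also have "\<dots> = a * integral V \<phi> - 2 * (S \<bullet> (x - p))"
  proof -
    have j1: "(\<lambda>q. a * \<phi> q) integrable_on V" using i1 by (rule integrable_on_mult_right)
    have j2: "(\<lambda>q. 2 * ((\<phi> q *\<^sub>R q) \<bullet> (x - p))) integrable_on V" using i3 by (rule integrable_on_mult_right)
    have "integral V (\<lambda>q. a * \<phi> q - 2 * ((\<phi> q *\<^sub>R q) \<bullet> (x - p)))
       = integral V (\<lambda>q. a * \<phi> q) - integral V (\<lambda>q. 2 * ((\<phi> q *\<^sub>R q) \<bullet> (x - p)))"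
      using integral_diff[OF j1 j2] .
    also have "\<dots> = a * integral V \<phi> - 2 * (S \<bullet> (x - p))"
      using e3 by (simp only: integral_mult_right)
    finally show ?thesis .
  qed
  also have "\<dots> = integral V \<phi> * (norm (x - c)^2 - norm (p - c)^2)"
    unfolding Sc a_def nd[of x c] nd[of p c] inner_scaleR_left inner_diff_right inner_commute[of x c] inner_commute[of p c]
    by (simp add: algebra_simps)
  finally show ?thesis unfolding c_def .
qed

lemma sqd_cont: "continuous_on S (\<lambda>q. sqd P q)"
  unfolding sqd_def by (intro continuous_intros)

lemma sqd_pt:
  fixes P :: "'a::euclidean_space ^ 'n"
  shows "sqd P q \<le> norm (q - P $ i)^2"
  unfolding sqd_def using infdist_le_pt[of q P i] infdist_nonneg[of q] by (intro power_mono) auto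

lemma config_spaceD: "P \<in> config_space Q \<Longrightarrow> P $ i \<in> Q"
  unfolding config_space_def by auto

lemma M_pos:
  fixes Q :: "'a::euclidean_space set" and \<phi> :: "'a \<Rightarrow> real" and P :: "'a ^ 'n"
  assumes Qc: "compact Q" "convex Q" "interior Q \<noteq> {}"
    and phi: "\<phi> integrable_on Q" "\<forall>q\<in>Q. 0 < \<phi> q"
    and P: "P \<in> config_space Q"
  shows "integral (voronoi_cell Q P i) \<phi> > 0"
proof -
  define V where "V = voronoi_cell Q P i"
  define p where "p = P $ i"
  have pQ: "p \<in> Q" using P config_spaceD p_def by blast
  obtain \<delta> where d: "\<delta> > 0" "\<forall>x\<in>range (\<lambda>j. P $ j). x \<noteq> p \<longrightarrow> \<delta> \<le> dist p x"
    using finite_set_avoid[of "range (\<lambda>j. P $ j)" p] by auto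
  define r where "r = \<delta> / 2"
  have r: "r > 0" using d r_def by simp
  define B where "B = ball p r \<inter> Q"
  have BV: "B \<subseteq> V"
  proof
    fix q assume q: "q \<in> B"
    have "norm (q - P $ i) \<le> norm (q - P $ j)" for j
    proof (cases "P $ j = p")
      case True then show ?thesis by (simp add: p_def)
    next
      case False
      then have "\<delta> \<le> dist p (P $ j)" using d by auto
      moreover have "dist p q < r" using q B_def by auto
      moreover have "dist p (P $ j) \<le> dist p q + dist q (P $ j)" by (rule dist_triangle)
      ultimately show ?thesis unfolding p_def r_def by (simp add: dist_norm norm_minus_commute)
    qed
    then show "q \<in> V" unfolding V_def voronoi_cell_def using q B_def by auto
  qed
  have Qcl: "closed Q" using Qc compact_imp_closed by blast
  have BL: "B \<in> sets lebesgue" unfolding B_def using Qcl by (simp add: borel_open borel_closed sets.Int)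
  obtain z where z: "z \<in> interior Q" using Qc by blast
  define e where "e = min 1 (r / (2 * (norm (p - z) + 1)))"
  have "0 < r / (2 * (norm (p - z) + 1))" proof (intro divide_pos_pos)
    show "0 < 2 * (norm (p - z) + 1)" by (smt (verit) norm_ge_zero)
  qed (use r in auto)
  then have e: "0 < e" "e \<le> 1" unfolding e_def by auto
  define w where "w = p - e *\<^sub>R (p - z)"
  have wQ: "w \<in> interior Q" unfolding w_def using mem_interior_convex_shrink[OF Qc(2) z pQ e] .
  have "dist p w = e * norm (p - z)" unfolding w_def dist_norm using e by simp
  also have "\<dots> \<le> r / (2 * (norm (p - z) + 1)) * norm (p - z)"
    unfolding e_def by (intro mult_right_mono) auto
  also have "\<dots> < r"
  proof -
    have "r / (2 * (norm (p - z) + 1)) * norm (p - z) = r * (norm (p - z) / (2 * (norm (p - z) + 1)))"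
      by simp
    also have "\<dots> < r * 1"
    proof (intro mult_strict_left_mono)
      have "0 < 2 * (norm (p - z) + 1)" "norm (p - z) < 2 * (norm (p - z) + 1)" by (smt (verit) norm_ge_zero)+
      then show "norm (p - z) / (2 * (norm (p - z) + 1)) < 1" by (simp add: divide_less_eq)
    qed (use r in auto)
    finally show ?thesis by simp
  qed
  finally have "w \<in> ball p r" by simp
  then have "w \<in> interior B" unfolding B_def using wQ by (simp add: interior_Int)
  then have nB: "\<not> negligible B"
    using negligible_convex_interior[of B] Qc(2) unfolding B_def by (auto simp: convex_Int)
  have aQ: "\<phi> absolutely_integrable_on Q"
    using phi nonnegative_absolutely_integrable_1 less_imp_le by blast
  have iB: "\<phi> integrable_on B"
    using ai_subset[OF aQ BL] B_def set_lebesgue_integral_eq_integral(1) by blast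
  have VQ: "V \<subseteq> Q" "closed V" unfolding V_def using vor_sub vor_closed[OF Qcl] by auto
  have phi0: "\<forall>q\<in>Q. 0 \<le> \<phi> q" using phi(2) by (simp add: less_imp_le)
  have iV: "\<phi> integrable_on V"
    using phi_prod_ai[OF Qc(1) phi(1) phi0 VQ, of "\<lambda>_. 1"]
      set_lebesgue_integral_eq_integral(1) by auto
  have "0 < integral B \<phi>"
    using pos_integral[OF iB _ BL nB] phi(2) B_def by auto
  also have "\<dots> \<le> integral V \<phi>"
    using integral_subset_le[OF BV iB iV] phi(2) VQ by (auto intro: less_imp_le)
  finally show ?thesis unfolding V_def .
qed

lemma hyper_negl:
  fixes a b :: "'a::euclidean_space"
  assumes "a \<noteq> b"
  shows "negligible {q. norm (q - a) = norm (q - b)}"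
proof -
  have "{q. norm (q - a) = norm (q - b)} = {q. (2 *\<^sub>R (b - a)) \<bullet> q = norm b ^ 2 - norm a ^ 2}"
  proof (intro Collect_cong)
    fix q
    have "norm (q - a) = norm (q - b) \<longleftrightarrow> norm (q - a)^2 = norm (q - b)^2"
      by (metis norm_ge_zero power2_eq_iff_nonneg)
    also have "\<dots> \<longleftrightarrow> (2 *\<^sub>R (b - a)) \<bullet> q = norm b ^ 2 - norm a ^ 2"
      unfolding nd[of q a] nd[of q b] inner_scaleR_left inner_diff_left inner_commute[of a q] inner_commute[of b q]
      by auto
    finally show "norm (q - a) = norm (q - b) \<longleftrightarrow> (2 *\<^sub>R (b - a)) \<bullet> q = norm b ^ 2 - norm a ^ 2" .
  qed
  moreover have "2 *\<^sub>R (b - a) \<noteq> 0" using assms by simp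
  ultimately show ?thesis using negligible_hyperplane by metis
qed

lemma sum_bound:
  fixes Q :: "'a::euclidean_space set" and \<phi> :: "'a \<Rightarrow> real" and P X :: "'a ^ 'n"
  assumes Qc: "compact Q"
    and phi: "\<phi> integrable_on Q" "\<forall>q\<in>Q. 0 \<le> \<phi> q"
  shows "integral Q (\<lambda>q. (sqd X q - sqd P q) * \<phi> q) \<le>
    (\<Sum>i\<in>UNIV. integral (voronoi_cell Q P i) (\<lambda>q. (norm (q - X $ i)^2 - norm (q - P $ i)^2) * \<phi> q)
        / real (card {l. P $ l = P $ i}))"
proof -
  define V where "V i = voronoi_cell Q P i" for i
  define k where "k q = real (card {i. q \<in> V i})" for q
  define m where "m i = real (card {l. P $ l = P $ i})" for i
  define g where "g i q = (norm (q - X $ i)^2 - norm (q - P $ i)^2) * \<phi> q" for i q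
  define h where "h i q = (if q \<in> V i then g i q / k q else 0)" for i q
  define h' where "h' i q = (if q \<in> V i then g i q / m i else 0)" for i q
  define N where "N = \<Union> ((\<lambda>(i, l). {q. norm (q - P $ i) = norm (q - P $ l)}) ` {(i, l). P $ i \<noteq> P $ l})"
  have Qcl: "closed Q" using Qc compact_imp_closed by blast
  have VQ: "V i \<subseteq> Q" "closed (V i)" for i unfolding V_def using vor_sub vor_closed[OF Qcl] by auto
  have nN: "negligible N" unfolding N_def
    by (intro negligible_Union) (auto intro: hyper_negl)
  have gi: "g i integrable_on V i" for i
  proof -
    have "(\<lambda>q. (norm (q - X $ i)^2 - norm (q - P $ i)^2) * \<phi> q) absolutely_integrable_on V i"
      by (rule phi_prod_ai[OF Qc phi VQ]) (intro continuous_intros)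
    then show ?thesis unfolding g_def using set_lebesgue_integral_eq_integral(1) by blast
  qed
  have h'i: "(h' i has_integral (integral (V i) (g i) / m i)) Q" for i
  proof -
    have "((\<lambda>q. g i q / m i) has_integral (integral (V i) (g i) / m i)) (V i)"
      using integrable_integral[OF gi] has_integral_divide by blast
    then show ?thesis unfolding h'_def using has_integral_restrict[OF VQ(1)[of i], of "\<lambda>q. g i q / m i"] by simp
  qed
  have heq: "h i q = h' i q" if "q \<in> Q - N" for i q
  proof (cases "q \<in> V i")
    case True
    have "{l. q \<in> V l} = {l. P $ l = P $ i}"
    proof (intro Collect_cong iffI)
      fix l assume "q \<in> V l"
      then have "norm (q - P $ l) = norm (q - P $ i)" using True unfolding V_def vor_mem by auto
      then show "P $ l = P $ i" using that unfolding N_def by auto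
    next
      fix l assume "P $ l = P $ i"
      then show "q \<in> V l" using True unfolding V_def vor_mem by auto
    qed
    then have "k q = m i" unfolding k_def m_def by simp
    then show ?thesis unfolding h_def h'_def by simp
  qed (simp add: h_def h'_def)
  have hi: "(h i has_integral (integral (V i) (g i) / m i)) Q" for i
    using has_integral_spike[OF nN _ h'i[of i]] heq by (metis)
  have lhs: "(\<lambda>q. (sqd X q - sqd P q) * \<phi> q) integrable_on Q"
  proof -
    have "(\<lambda>q. (sqd X q - sqd P q) * \<phi> q) absolutely_integrable_on Q"
      by (rule phi_prod_ai[OF Qc phi subset_refl Qcl]) (intro continuous_intros sqd_cont)
    then show ?thesis using set_lebesgue_integral_eq_integral(1) by blast
  qed
  have pt: "(sqd X q - sqd P q) * \<phi> q \<le> (\<Sum>i\<in>UNIV. h i q)" if q: "q \<in> Q" for q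
  proof -
    define I where "I = {i. q \<in> V i}"
    obtain i0 where i0: "infdist q (range (\<lambda>i. P $ i)) = norm (q - P $ i0)" using infdist_attain[of q P] by blast
    have "i0 \<in> I" unfolding I_def V_def vor_mem using q i0 by simp
    then have Ine: "I \<noteq> {}" by blast
    have kI: "k q = real (card I)" unfolding k_def I_def by simp
    have kpos: "k q > 0" unfolding kI using Ine by (simp add: card_gt_0_iff)
    have lo: "(sqd X q - sqd P q) * \<phi> q \<le> g i q" if "i \<in> I" for i
    proof -
      have "norm (q - P $ i) = infdist q (range (\<lambda>i. P $ i))" using that unfolding I_def V_def vor_mem by simp
      then have "sqd P q = norm (q - P $ i)^2" unfolding sqd_def by simp
      moreover have "sqd X q \<le> norm (q - X $ i)^2" by (rule sqd_pt)
      ultimately show ?thesis unfolding g_def using phi(2) q by (intro mult_right_mono) auto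
    qed
    have "(\<Sum>i\<in>UNIV. h i q) = (\<Sum>i\<in>I. g i q / k q)"
      unfolding h_def I_def by (simp add: sum.If_cases)
    also have "\<dots> \<ge> (\<Sum>i\<in>I. (sqd X q - sqd P q) * \<phi> q / k q)"
      using lo kpos by (intro sum_mono divide_right_mono) auto
    moreover have "(\<Sum>i\<in>I. (sqd X q - sqd P q) * \<phi> q / k q) = (sqd X q - sqd P q) * \<phi> q"
      using kpos Ine unfolding kI by simp
    ultimately show ?thesis by simp
  qed
  have "integral Q (\<lambda>q. (sqd X q - sqd P q) * \<phi> q) \<le> integral Q (\<lambda>q. \<Sum>i\<in>UNIV. h i q)"
    using hi by (intro integral_le lhs pt integrable_sum) auto
  also have "\<dots> = (\<Sum>i\<in>UNIV. integral Q (h i))"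
    using hi by (intro integral_sum) auto
  also have "\<dots> = (\<Sum>i\<in>UNIV. integral (V i) (g i) / m i)"
    using hi by (intro sum.cong refl integral_unique)
  finally show ?thesis unfolding V_def g_def m_def .
qed

definition energy :: "'a::euclidean_space set \<Rightarrow> ('a \<Rightarrow> real) \<Rightarrow> 'a ^ 'n \<Rightarrow> real" where
  "energy Q \<phi> P = integral Q (\<lambda>q. sqd P q * \<phi> q)"

lemma energy_step:
  fixes Q :: "'a::euclidean_space set" and \<phi> :: "'a \<Rightarrow> real" and P X :: "'a ^ 'n"
  assumes Qc: "compact Q" "convex Q" "interior Q \<noteq> {}"
    and phi: "\<phi> integrable_on Q" "\<forall>q\<in>Q. 0 < \<phi> q"
    and P: "P \<in> config_space Q"
    and le: "\<And>i. norm (X $ i - centroid \<phi> (voronoi_cell Q P i)) \<le> norm (P $ i - centroid \<phi> (voronoi_cell Q P i))"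
  shows "energy Q \<phi> X \<le> energy Q \<phi> P \<and>
    ((\<exists>j. norm (X $ j - centroid \<phi> (voronoi_cell Q P j)) < norm (P $ j - centroid \<phi> (voronoi_cell Q P j)))
       \<longrightarrow> energy Q \<phi> X < energy Q \<phi> P)"
proof -
  define V where "V i = voronoi_cell Q P i" for i
  define c where "c i = centroid \<phi> (V i)" for i
  define m where "m i = real (card {l. P $ l = P $ i})" for i
  define t where "t i = integral (V i) \<phi> * (norm (X $ i - c i)^2 - norm (P $ i - c i)^2) / m i" for i
  have phi0: "\<forall>q\<in>Q. 0 \<le> \<phi> q" using phi(2) by (simp add: less_imp_le)
  have Qcl: "closed Q" using Qc compact_imp_closed by blast
  have VQ: "V i \<subseteq> Q" "closed (V i)" for i unfolding V_def using vor_sub vor_closed[OF Qcl] by auto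
  have Mp: "integral (V i) \<phi> > 0" for i unfolding V_def using M_pos[OF Qc phi P] .
  have mp: "m i > 0" for i unfolding m_def by (auto simp: card_gt_0_iff)
  have ti: "integral (V i) (\<lambda>q. (norm (q - X $ i)^2 - norm (q - P $ i)^2) * \<phi> q) / m i = t i" for i
    unfolding t_def c_def using cent_id[OF Qc(1) phi(1) phi0 VQ Mp] by simp
  have tle: "t i \<le> 0" for i
  proof -
    have "norm (X $ i - c i)^2 \<le> norm (P $ i - c i)^2"
      using le[of i] unfolding c_def V_def by (simp add: power_mono)
    then show ?thesis unfolding t_def using Mp[of i] mp[of i]
      by (intro divide_nonpos_pos mult_nonneg_nonpos) auto
  qed
  have iX: "(\<lambda>q. sqd X q * \<phi> q) integrable_on Q" and iP: "(\<lambda>q. sqd P q * \<phi> q) integrable_on Q"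
    using phi_prod_ai[OF Qc(1) phi(1) phi0 subset_refl Qcl sqd_cont] set_lebesgue_integral_eq_integral(1)
    by blast+
  have "energy Q \<phi> X - energy Q \<phi> P = integral Q (\<lambda>q. (sqd X q - sqd P q) * \<phi> q)"
    unfolding energy_def using integral_diff[OF iX iP] by (simp add: algebra_simps)
  also have "\<dots> \<le> (\<Sum>i\<in>UNIV. t i)"
    using sum_bound[OF Qc(1) phi(1) phi0, of X P] ti unfolding V_def m_def by simp
  finally have main: "energy Q \<phi> X - energy Q \<phi> P \<le> (\<Sum>i\<in>UNIV. t i)" .
  have "(\<Sum>i\<in>UNIV. t i) \<le> 0" using tle by (simp add: sum_nonpos)
  moreover have "(\<Sum>i\<in>UNIV. t i) < 0"
    if "norm (X $ j - c j) < norm (P $ j - c j)" for j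
  proof -
    have "norm (X $ j - c j)^2 < norm (P $ j - c j)^2"
      using that by (simp add: power_strict_mono)
    then have "t j < 0" unfolding t_def using Mp[of j] mp[of j]
      by (intro divide_neg_pos mult_pos_neg) auto
    moreover have "(\<Sum>i\<in>UNIV. t i) = t j + (\<Sum>i\<in>UNIV - {j}. t i)"
      by (simp add: sum.remove)
    moreover have "(\<Sum>i\<in>UNIV - {j}. t i) \<le> 0" using tle by (simp add: sum_nonpos)
    ultimately show ?thesis by linarith
  qed
  ultimately show ?thesis using main unfolding c_def V_def by force
qed

lemma cs_closed:
  fixes Q :: "'a::euclidean_space set"
  assumes "closed Q" shows "closed (config_space Q :: ('a ^ 'n) set)"
proof -
  have "config_space Q = (\<Inter>i. (\<lambda>P::'a^'n. P $ i) -` Q)" unfolding config_space_def by auto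
  moreover have "closed ((\<lambda>P::'a^'n. P $ i) -` Q)" for i
    by (intro continuous_closed_vimage assms) (auto intro: continuous_intros)
  ultimately show ?thesis by (simp add: closed_INT)
qed

lemma cs_compact:
  fixes Q :: "'a::euclidean_space set"
  assumes "compact Q" shows "compact (config_space Q :: ('a ^ 'n) set)"
proof -
  obtain B where B: "\<forall>q\<in>Q. norm q \<le> B" using assms compact_imp_bounded bounded_iff by metis
  have "norm P \<le> real CARD('n) * B" if "P \<in> config_space Q" for P :: "'a^'n"
  proof -
    have "norm P \<le> (\<Sum>i\<in>UNIV. norm (P $ i))" unfolding norm_vec_def by (rule L2_set_le_sum) simp
    also have "\<dots> \<le> (\<Sum>i\<in>(UNIV::'n set). B)" using that B by (intro sum_mono) (auto simp: config_space_def)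
    finally show ?thesis by simp
  qed
  then have "bounded (config_space Q :: ('a ^ 'n) set)" unfolding bounded_iff by blast
  then show ?thesis using cs_closed[OF compact_imp_closed[OF assms]] compact_eq_bounded_closed by blast
qed

lemma energy_lip:
  fixes Q :: "'a::euclidean_space set" and \<phi> :: "'a \<Rightarrow> real" and P P' :: "'a ^ 'n"
  assumes Qc: "compact Q" and phi: "\<phi> integrable_on Q" "\<forall>q\<in>Q. 0 \<le> \<phi> q"
    and P: "P \<in> config_space Q" and P': "P' \<in> config_space Q"
  shows "\<bar>energy Q \<phi> P - energy Q \<phi> P'\<bar> \<le> 2 * diameter Q * integral Q \<phi> * dist P P'"
proof -
  define D where "D = diameter Q"
  define d where "d = dist P P'"
  have Qcl: "closed Q" using Qc compact_imp_closed by blast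
  have bQ: "bounded Q" using Qc compact_imp_bounded by blast
  have comp: "\<bar>sqd P q - sqd P' q\<bar> \<le> 2 * D * d" if q: "q \<in> Q" for q
  proof -
    have key: "infdist q (range (\<lambda>i. A $ i)) \<le> infdist q (range (\<lambda>i. B $ i)) + dist A B"
      for A B :: "'a^'n"
    proof -
      obtain i where i: "infdist q (range (\<lambda>i. B $ i)) = norm (q - B $ i)" using infdist_attain[of q B] by blast
      have "infdist q (range (\<lambda>i. A $ i)) \<le> norm (q - A $ i)" by (rule infdist_le_pt)
      also have "\<dots> \<le> norm (q - B $ i) + norm (B $ i - A $ i)"
        using norm_triangle_ineq[of "q - B $ i" "B $ i - A $ i"] by simp
      also have "norm (B $ i - A $ i) \<le> dist A B"
        using Finite_Cartesian_Product.norm_nth_le[of "B - A" i] by (simp add: dist_norm norm_minus_commute)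
      finally show ?thesis using i by simp
    qed
    define a where "a = infdist q (range (\<lambda>i. P $ i))"
    define b where "b = infdist q (range (\<lambda>i. P' $ i))"
    have ab: "\<bar>a - b\<bar> \<le> d" using key[of P P'] key[of P' P] unfolding a_def b_def d_def
      by (simp add: dist_commute)
    have bnd: "infdist q (range (\<lambda>i. A $ i)) \<le> D" if "A \<in> config_space Q" for A :: "'a^'n"
    proof -
      have "infdist q (range (\<lambda>i. A $ i)) \<le> norm (q - A $ undefined)" by (rule infdist_le_pt)
      also have "\<dots> \<le> D" unfolding D_def using diameter_bounded_bound[OF bQ q config_spaceD[OF that]]
        by (simp add: dist_norm)
      finally show ?thesis .
    qed
    have a0: "0 \<le> a" "a \<le> D" using bnd[OF P] infdist_nonneg unfolding a_def by auto
    have b0: "0 \<le> b" "b \<le> D" using bnd[OF P'] infdist_nonneg unfolding b_def by auto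
    have "\<bar>sqd P q - sqd P' q\<bar> = \<bar>a - b\<bar> * (a + b)"
    proof -
      have "a\<^sup>2 - b\<^sup>2 = (a - b) * (a + b)" by (simp add: power2_eq_square algebra_simps)
      then show ?thesis unfolding sqd_def a_def[symmetric] b_def[symmetric] using a0 b0
        by (simp add: abs_mult)
    qed
    also have "\<dots> \<le> d * (2 * D)" using ab a0 b0 by (intro mult_mono) auto
    finally show ?thesis by (simp add: mult.commute mult.left_commute)
  qed
  have phi0: "\<forall>q\<in>Q. 0 \<le> \<phi> q" using phi by auto
  have iP: "(\<lambda>q. sqd P q * \<phi> q) integrable_on Q" and iP': "(\<lambda>q. sqd P' q * \<phi> q) integrable_on Q"
    using phi_prod_ai[OF Qc phi(1) phi0 subset_refl Qcl sqd_cont] set_lebesgue_integral_eq_integral(1)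
    by blast+
  have iphi: "\<phi> integrable_on Q" using phi by simp
  have iD: "(\<lambda>q. (2 * D * d) * \<phi> q) integrable_on Q" using integrable_on_mult_right[OF iphi] .
  have e: "energy Q \<phi> P - energy Q \<phi> P' = integral Q (\<lambda>q. sqd P q * \<phi> q - sqd P' q * \<phi> q)"
    unfolding energy_def using integral_diff[OF iP iP'] by simp
  have idf: "(\<lambda>q. sqd P q * \<phi> q - sqd P' q * \<phi> q) integrable_on Q" using integrable_diff[OF iP iP'] .
  have "integral Q (\<lambda>q. sqd P q * \<phi> q - sqd P' q * \<phi> q) \<le> integral Q (\<lambda>q. (2 * D * d) * \<phi> q)"
  proof (rule integral_le[OF idf iD])
    fix q assume q: "q \<in> Q"
    have "sqd P q - sqd P' q \<le> 2 * D * d" using comp[OF q] by linarith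
    then have "(sqd P q - sqd P' q) * \<phi> q \<le> (2 * D * d) * \<phi> q" using phi q by (intro mult_right_mono) auto
    then show "sqd P q * \<phi> q - sqd P' q * \<phi> q \<le> (2 * D * d) * \<phi> q" by (simp add: algebra_simps)
  qed
  moreover have "- integral Q (\<lambda>q. (2 * D * d) * \<phi> q) \<le> integral Q (\<lambda>q. sqd P q * \<phi> q - sqd P' q * \<phi> q)"
  proof -
    have "integral Q (\<lambda>q. - ((2 * D * d) * \<phi> q)) \<le> integral Q (\<lambda>q. sqd P q * \<phi> q - sqd P' q * \<phi> q)"
    proof (rule integral_le[OF integrable_neg[OF iD] idf])
      fix q assume q: "q \<in> Q"
      have "- (2 * D * d) \<le> sqd P q - sqd P' q" using comp[OF q] by linarith
      then have "- (2 * D * d) * \<phi> q \<le> (sqd P q - sqd P' q) * \<phi> q" using phi q by (intro mult_right_mono) auto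
      then show "- ((2 * D * d) * \<phi> q) \<le> sqd P q * \<phi> q - sqd P' q * \<phi> q" by (simp add: algebra_simps)
    qed
    then show ?thesis by (simp add: integral_neg)
  qed
  ultimately have "\<bar>energy Q \<phi> P - energy Q \<phi> P'\<bar> \<le> integral Q (\<lambda>q. (2 * D * d) * \<phi> q)"
    using e by linarith
  also have "\<dots> = 2 * D * integral Q \<phi> * d" by simp
  finally show ?thesis unfolding D_def d_def .
qed

lemma energy_tendsto:
  fixes Q :: "'a::euclidean_space set" and \<phi> :: "'a \<Rightarrow> real" and x :: "nat \<Rightarrow> 'a ^ 'n"
  assumes Qc: "compact Q" and phi: "\<phi> integrable_on Q" "\<forall>q\<in>Q. 0 \<le> \<phi> q"
    and x: "\<And>k. x k \<in> config_space Q" and y: "y \<in> config_space Q" and lim: "x \<longlonglongrightarrow> y"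
  shows "(\<lambda>k. energy Q \<phi> (x k)) \<longlonglongrightarrow> energy Q \<phi> y"
proof -
  define L where "L = 2 * diameter Q * integral Q \<phi>"
  have "(\<lambda>k. dist (x k) y) \<longlonglongrightarrow> 0" using lim tendsto_dist_iff by blast
  then have g: "(\<lambda>k. L * dist (x k) y) \<longlonglongrightarrow> 0" using tendsto_mult_right_zero by blast
  have "(\<lambda>k. energy Q \<phi> (x k) - energy Q \<phi> y) \<longlonglongrightarrow> 0"
  proof (rule Lim_null_comparison[OF _ g])
    show "\<forall>\<^sub>F k in sequentially. norm (energy Q \<phi> (x k) - energy Q \<phi> y) \<le> L * dist (x k) y"
      using energy_lip[OF Qc phi x y] unfolding L_def by (auto intro!: always_eventually)
  qed
  then show ?thesis by (rule LIM_zero_cancel)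
qed

lemma subsub_zero:
  fixes u :: "nat \<Rightarrow> real"
  assumes "\<And>r::nat\<Rightarrow>nat. strict_mono r \<Longrightarrow> \<exists>r'::nat\<Rightarrow>nat. strict_mono r' \<and> (\<lambda>n. u (r (r' n))) \<longlonglongrightarrow> 0"
  shows "u \<longlonglongrightarrow> 0"
proof (rule ccontr)
  assume "\<not> u \<longlonglongrightarrow> 0"
  then obtain e where e: "e > 0" "\<forall>N. \<exists>n\<ge>N. \<not> norm (u n) < e"
    unfolding LIMSEQ_iff by auto
  define S where "S = {n. e \<le> norm (u n)}"
  have "infinite S" unfolding infinite_nat_iff_unbounded_le S_def using e(2) by (auto simp: not_less)
  then obtain r :: "nat \<Rightarrow> nat" where r: "strict_mono r" "\<forall>n. r n \<in> S" using infinite_enumerate by blast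
  obtain r' where r': "strict_mono r'" "(\<lambda>n. u (r (r' n))) \<longlonglongrightarrow> 0" using assms[OF r(1)] by blast
  have "\<exists>N. \<forall>n\<ge>N. norm (u (r (r' n)) - 0) < e" using r'(2) e(1) unfolding LIMSEQ_iff by blast
  then obtain N where "\<forall>n\<ge>N. norm (u (r (r' n))) < e" by auto
  then have "norm (u (r (r' N))) < e" by simp
  moreover have "e \<le> norm (u (r (r' N)))" using r(2) unfolding S_def by blast
  ultimately show False by simp
qed

theorem proposition2:
  fixes Q :: "'a::euclidean_space set" and \<phi> :: "'a \<Rightarrow> real"
    and T :: "'a ^ 'n \<Rightarrow> 'a ^ 'n" and P0 :: "'a ^ 'n"
  assumes Q: "polytope Q" "interior Q \<noteq> {}"
    and phi_int: "\<phi> integrable_on Q" and phi_pos: "\<forall>q\<in>Q. 0 < \<phi> q"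
    and T_cont: "continuous_on (config_space Q) T"
    and T_maps: "T ` config_space Q \<subseteq> config_space Q"
    and a: "\<And>P i. P \<in> config_space Q \<Longrightarrow>
              norm (T P $ i - centroid \<phi> (voronoi_cell Q P i))
                \<le> norm (P $ i - centroid \<phi> (voronoi_cell Q P i))"
    and b: "\<And>P. P \<in> config_space Q \<Longrightarrow> \<not> centroidal_voronoi Q \<phi> P \<Longrightarrow>
              \<exists>j. norm (T P $ j - centroid \<phi> (voronoi_cell Q P j))
                   < norm (P $ j - centroid \<phi> (voronoi_cell Q P j))"
    and P0: "P0 \<in> config_space Q"
  shows "(\<lambda>m. infdist ((T ^^ Suc m) P0)
              {P \<in> config_space Q. centroidal_voronoi Q \<phi> P}) \<longlonglongrightarrow> 0 \<and>
         (finite {P \<in> (config_space Q :: ('a ^ 'n) set). centroidal_voronoi Q \<phi> P} \<longrightarrow>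
         (\<exists>C\<in>{P \<in> config_space Q. centroidal_voronoi Q \<phi> P}.
           (\<lambda>m. (T ^^ Suc m) P0) \<longlonglongrightarrow> C))"
proof -
  define CS where "CS = (config_space Q :: ('a ^ 'n) set)"
  define S where "S = {P \<in> CS. centroidal_voronoi Q \<phi> P}"
  define x where "x m = (T ^^ m) P0" for m
  define E where "E m = energy Q \<phi> (x m)" for m
  have Qc: "compact Q" using Q(1) polytope_imp_compact by blast
  have Qcv: "convex Q" using Q(1) polytope_imp_convex by blast
  have phi0: "\<forall>q\<in>Q. 0 \<le> \<phi> q" using phi_pos by (simp add: less_imp_le)
  have CSc: "compact CS" unfolding CS_def using cs_compact[OF Qc] .
  have CScl: "closed CS" using CSc compact_imp_closed by blast
  have xs: "x (Suc m) = T (x m)" for m unfolding x_def by simp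
  have xin: "x m \<in> CS" for m
  proof (induction m)
    case 0 then show ?case using P0 unfolding x_def CS_def by simp
  next
    case (Suc m) then show ?case using T_maps unfolding xs CS_def by blast
  qed
  have TCS: "T P \<in> CS" if "P \<in> CS" for P using that T_maps unfolding CS_def by blast
  have Edec: "E (Suc m) \<le> E m" for m
  proof -
    have xm: "x m \<in> config_space Q" using xin unfolding CS_def by blast
    show ?thesis using energy_step[OF Qc Qcv Q(2) phi_int phi_pos xm a[OF xm]]
      unfolding E_def xs by blast
  qed
  have Enn: "0 \<le> E m" for m
  proof -
    have "(\<lambda>q. sqd (x m) q * \<phi> q) integrable_on Q"
      using phi_prod_ai[OF Qc phi_int phi0 subset_refl compact_imp_closed[OF Qc] sqd_cont]
        set_lebesgue_integral_eq_integral(1) by blast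
    then show ?thesis unfolding E_def energy_def
      by (rule integral_nonneg) (use phi0 in \<open>auto simp: sqd_def\<close>)
  qed
  have "antimono_on UNIV E" unfolding decseq_Suc_iff using Edec by blast
  then obtain L where L: "E \<longlonglongrightarrow> L"
  proof (rule decseq_convergent[of E 0])
    show "\<forall>i. 0 \<le> E i" using Enn by blast
  qed
  have K: "y \<in> S \<and> T y = y" if r: "strict_mono r" and lim: "(\<lambda>n. x (r n)) \<longlonglongrightarrow> y" for r y
  proof -
    have xr: "\<And>n. x (r n) \<in> CS" using xin by blast
    have yCS: "y \<in> CS" using closed_sequentially[OF CScl xr lim] .
    have xr': "\<And>n. x (r n) \<in> config_space Q" using xin unfolding CS_def by blast
    have yCS': "y \<in> config_space Q" using yCS unfolding CS_def .
    have "(\<lambda>n. energy Q \<phi> (x (r n))) \<longlonglongrightarrow> energy Q \<phi> y"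
      by (rule energy_tendsto[OF Qc phi_int phi0 xr' yCS' lim])
    then have l1: "(\<lambda>n. E (r n)) \<longlonglongrightarrow> energy Q \<phi> y" unfolding E_def .
    have l2: "(\<lambda>n. E (r n)) \<longlonglongrightarrow> L" using LIMSEQ_subseq_LIMSEQ[OF L r] by (simp add: o_def)
    have Ey: "energy Q \<phi> y = L" using LIMSEQ_unique[OF l1 l2] .
    have ev: "\<forall>\<^sub>F n in sequentially. x (r n) \<in> config_space Q" using xr' by simp
    have "(\<lambda>n. T (x (r n))) \<longlonglongrightarrow> T y"
      using continuous_on_tendsto_compose[OF T_cont lim yCS' ev] .
    then have limT: "(\<lambda>n. x (Suc (r n))) \<longlonglongrightarrow> T y" unfolding xs .
    have TyCS: "T y \<in> config_space Q" using TCS yCS unfolding CS_def by blast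
    have xs': "\<And>n. x (Suc (r n)) \<in> config_space Q" using xin unfolding CS_def by blast
    have "(\<lambda>n. energy Q \<phi> (x (Suc (r n)))) \<longlonglongrightarrow> energy Q \<phi> (T y)"
      by (rule energy_tendsto[OF Qc phi_int phi0 xs' TyCS limT])
    then have l3: "(\<lambda>n. E (Suc (r n))) \<longlonglongrightarrow> energy Q \<phi> (T y)" unfolding E_def .
    have sm: "strict_mono (\<lambda>n. Suc (r n))" using r by (simp add: strict_mono_def)
    have l4: "(\<lambda>n. E (Suc (r n))) \<longlonglongrightarrow> L" using LIMSEQ_subseq_LIMSEQ[OF L sm] by (simp add: o_def)
    have ETy: "energy Q \<phi> (T y) = L" using LIMSEQ_unique[OF l3 l4] .
    have cv: "centroidal_voronoi Q \<phi> y"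
    proof (rule ccontr)
      assume ncv: "\<not> centroidal_voronoi Q \<phi> y"
      obtain j where j: "norm (T y $ j - centroid \<phi> (voronoi_cell Q y j))
                   < norm (y $ j - centroid \<phi> (voronoi_cell Q y j))"
        using b[OF yCS' ncv] by blast
      have "energy Q \<phi> (T y) \<le> energy Q \<phi> y \<and>
        ((\<exists>j. norm (T y $ j - centroid \<phi> (voronoi_cell Q y j)) < norm (y $ j - centroid \<phi> (voronoi_cell Q y j)))
       \<longrightarrow> energy Q \<phi> (T y) < energy Q \<phi> y)"
        by (rule energy_step[OF Qc Qcv Q(2) phi_int phi_pos yCS' a[OF yCS']])
      then have "energy Q \<phi> (T y) < energy Q \<phi> y" using j by blast
      then show False using Ey ETy by simp
    qed
    have "T y $ i = y $ i" for i
    proof -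
      have "norm (T y $ i - centroid \<phi> (voronoi_cell Q y i)) \<le> norm (y $ i - centroid \<phi> (voronoi_cell Q y i))"
        by (rule a[OF yCS'])
      moreover have "y $ i = centroid \<phi> (voronoi_cell Q y i)" using cv unfolding centroidal_voronoi_def by blast
      ultimately have "norm (T y $ i - y $ i) \<le> 0" by simp
      then show ?thesis by simp
    qed
    then have "T y = y" by (simp add: vec_eq_iff)
    then show ?thesis using cv yCS unfolding S_def by blast
  qed
  have sub: "\<exists>r' y. strict_mono r' \<and> (\<lambda>n. x (r (r' n))) \<longlonglongrightarrow> y \<and> y \<in> S \<and> T y = y"
    if r: "strict_mono r" for r :: "nat \<Rightarrow> nat"
  proof -
    have "\<forall>n. x (r n) \<in> CS" using xin by blast
    then obtain y r' where y: "y \<in> CS" "strict_mono r'" "((\<lambda>n. x (r n)) \<circ> r') \<longlonglongrightarrow> y"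
      by (rule seq_compactE[OF compact_imp_seq_compact[OF CSc], of "\<lambda>n. x (r n)"]) (use \<open>\<forall>n. x (r n) \<in> CS\<close> in auto)
    have sm: "strict_mono (r \<circ> r')" using r y(2) strict_mono_o by blast
    have lim: "(\<lambda>n. x ((r \<circ> r') n)) \<longlonglongrightarrow> y" using y(3) by (simp add: o_def)
    have "y \<in> S \<and> T y = y" using K[OF sm lim] .
    then show ?thesis using y(2) lim unfolding o_def by blast
  qed
  have part1: "(\<lambda>m. infdist (x m) S) \<longlonglongrightarrow> 0"
  proof (rule subsub_zero)
    fix r :: "nat \<Rightarrow> nat" assume r: "strict_mono r"
    obtain r' y where r'a: "strict_mono r' \<and> (\<lambda>n. x (r (r' n))) \<longlonglongrightarrow> y \<and> y \<in> S \<and> T y = y"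
      using sub[OF r] by (elim exE) (rule that)
    then have r': "strict_mono r'" "(\<lambda>n. x (r (r' n))) \<longlonglongrightarrow> y" "y \<in> S" by auto
    have g: "(\<lambda>n. dist (x (r (r' n))) y) \<longlonglongrightarrow> 0" using iffD1[OF tendsto_dist_iff r'(2)] .
    have ev: "\<forall>\<^sub>F n in sequentially. norm (infdist (x (r (r' n))) S) \<le> dist (x (r (r' n))) y"
    proof (intro always_eventually allI)
      fix n
      have "infdist (x (r (r' n))) S \<le> dist (x (r (r' n))) y" using infdist_le[OF r'(3)] .
      then show "norm (infdist (x (r (r' n))) S) \<le> dist (x (r (r' n))) y"
        using infdist_nonneg[of "x (r (r' n))" S] by simp
    qed
    have "(\<lambda>n. infdist (x (r (r' n))) S) \<longlonglongrightarrow> 0" using Lim_null_comparison[OF ev g] .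
    then show "\<exists>r'. strict_mono r' \<and> (\<lambda>n. infdist (x (r (r' n))) S) \<longlonglongrightarrow> 0" using r'(1) by blast
  qed
  have P1: "(\<lambda>m. infdist (x (Suc m)) S) \<longlonglongrightarrow> 0" using LIMSEQ_Suc[OF part1] .
  have P2: "\<exists>C\<in>S. (\<lambda>m. x (Suc m)) \<longlonglongrightarrow> C" if fin: "finite S"
  proof -
    have step: "(\<lambda>m. dist (x (Suc m)) (x m)) \<longlonglongrightarrow> 0"
    proof (rule subsub_zero)
      fix r :: "nat \<Rightarrow> nat" assume r: "strict_mono r"
      obtain r' y where r'a: "strict_mono r' \<and> (\<lambda>n. x (r (r' n))) \<longlonglongrightarrow> y \<and> y \<in> S \<and> T y = y"
        using sub[OF r] by (elim exE) (rule that)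
      then have r': "strict_mono r'" "(\<lambda>n. x (r (r' n))) \<longlonglongrightarrow> y" "y \<in> S" "T y = y" by auto
      have yCS: "y \<in> config_space Q" using r'(3) unfolding S_def CS_def by simp
      have ev: "\<forall>\<^sub>F n in sequentially. x (r (r' n)) \<in> config_space Q" using xin unfolding CS_def by simp
      have "(\<lambda>n. T (x (r (r' n)))) \<longlonglongrightarrow> T y"
        using continuous_on_tendsto_compose[OF T_cont r'(2) yCS ev] .
      then have "(\<lambda>n. x (Suc (r (r' n)))) \<longlonglongrightarrow> y" unfolding xs r'(4) .
      then have "(\<lambda>n. dist (x (Suc (r (r' n)))) (x (r (r' n)))) \<longlonglongrightarrow> dist y y"
        using r'(2) by (intro tendsto_dist)
      then show "\<exists>r'. strict_mono r' \<and> (\<lambda>n. dist (x (Suc (r (r' n)))) (x (r (r' n)))) \<longlonglongrightarrow> 0"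
        using r'(1) by auto
    qed
    have sid: "strict_mono (id :: nat \<Rightarrow> nat)" by (simp add: strict_mono_def)
    obtain r0 c where r0a: "strict_mono r0 \<and> (\<lambda>n. x (id (r0 n))) \<longlonglongrightarrow> c \<and> c \<in> S \<and> T c = c"
      using sub[OF sid] by (elim exE) (rule that)
    then have r0: "strict_mono r0" "(\<lambda>n. x (r0 n)) \<longlonglongrightarrow> c" "c \<in> S" by auto
    obtain d where d: "d > 0" "\<forall>s\<in>S. s \<noteq> c \<longrightarrow> d \<le> dist c s"
      using finite_set_avoid[OF fin, of c] by (elim exE conjE) (rule that)
    have Scl: "closed S" using finite_imp_closed[OF fin] .
    have Sne: "S \<noteq> {}" using r0(3) by auto
    have near: "s = c" if "s \<in> S" "dist c s < d" for s
    proof (rule ccontr)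
      assume "s \<noteq> c" then have "d \<le> dist c s" using d(2) that(1) by simp
      then show False using that(2) by simp
    qed
    have d3: "(0::real) < d / 3" using d(1) by simp
    have "\<forall>\<^sub>F n in sequentially. infdist (x n) S < d / 3" using order_tendstoD(2)[OF part1 d3] .
    then obtain N1 where N1: "\<forall>n\<ge>N1. infdist (x n) S < d / 3" unfolding eventually_sequentially by blast
    have "\<forall>\<^sub>F n in sequentially. dist (x (Suc n)) (x n) < d / 3" using order_tendstoD(2)[OF step d3] .
    then obtain N2 where N2: "\<forall>n\<ge>N2. dist (x (Suc n)) (x n) < d / 3" unfolding eventually_sequentially by blast
    have "(\<lambda>n. dist (x (r0 n)) c) \<longlonglongrightarrow> 0" using iffD1[OF tendsto_dist_iff r0(2)] .
    then have "\<forall>\<^sub>F n in sequentially. dist (x (r0 n)) c < d / 3" using order_tendstoD(2)[OF _ d3] by simp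
    then obtain N3 where N3: "\<forall>n\<ge>N3. dist (x (r0 n)) c < d / 3" unfolding eventually_sequentially by blast
    define m0 where "m0 = r0 (max N3 (max N1 N2))"
    have m0: "m0 \<ge> N1" "m0 \<ge> N2" "dist (x m0) c < d / 3"
      unfolding m0_def using N3 seq_suble[OF r0(1), of "max N3 (max N1 N2)"] by auto
    have closeinf: "\<exists>s\<in>S. infdist (x n) S = dist (x n) s" for n
      by (rule infdist_attains_inf[OF Scl Sne, of "x n"]) (rule bexI)
    have stayk: "dist (x (m0 + k)) c < d / 3" for k
    proof (induction k)
      case 0 then show ?case using m0 by simp
    next
      case (Suc k)
      define n where "n = m0 + k"
      have IH: "dist (x n) c < d / 3" using Suc.IH unfolding n_def .
      have nN1: "Suc n \<ge> N1" and nN2: "n \<ge> N2" using m0 unfolding n_def by auto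
      have h1: "dist (x (Suc n)) (x n) < d / 3" using N2 nN2 by blast
      have "dist (x (Suc n)) c \<le> dist (x (Suc n)) (x n) + dist (x n) c" by (rule dist_triangle)
      also have "\<dots> < 2 * d / 3" using h1 IH by simp
      finally have a1: "dist (x (Suc n)) c < 2 * d / 3" .
      obtain s where s: "s \<in> S" "infdist (x (Suc n)) S = dist (x (Suc n)) s" using closeinf[of "Suc n"] by (elim bexE) (rule that)
      have "infdist (x (Suc n)) S < d / 3" using N1 nN1 by blast
      then have h2: "dist (x (Suc n)) s < d / 3" using s(2) by simp
      have "dist c s \<le> dist c (x (Suc n)) + dist (x (Suc n)) s" by (rule dist_triangle)
      also have "\<dots> < d" using a1 h2 by (simp add: dist_commute)
      finally have "s = c" using near s(1) by blast
      then show ?case using h2 unfolding n_def by simp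
    qed
    have stay: "dist (x n) c < d / 3" if "n \<ge> m0" for n
      using stayk[of "n - m0"] that by simp
    have eqd: "dist (x n) c = infdist (x n) S" if "n \<ge> m0" for n
    proof -
      obtain s where s: "s \<in> S" "infdist (x n) S = dist (x n) s" using closeinf[of n] by (elim bexE) (rule that)
      have "dist (x n) s \<le> dist (x n) c" using s(2) infdist_le[OF r0(3), of "x n"] by linarith
      have "dist c s \<le> dist c (x n) + dist (x n) s" by (rule dist_triangle)
      also have "\<dots> < d" using stay[OF that] \<open>dist (x n) s \<le> dist (x n) c\<close> d(1) dist_commute[of c "x n"] by linarith
      finally have "dist c s < d" .
      then have "s = c" using near s(1) by blast
      then show ?thesis using s by simp
    qed
    have "(\<lambda>n. dist (x n) c) \<longlonglongrightarrow> 0"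
    proof (rule Lim_null_comparison[OF _ part1])
      show "\<forall>\<^sub>F n in sequentially. norm (dist (x n) c) \<le> infdist (x n) S"
        using eqd infdist_nonneg unfolding eventually_sequentially by (intro exI[of _ m0]) auto
    qed
    then have "x \<longlonglongrightarrow> c" by (rule iffD2[OF tendsto_dist_iff])
    then have "(\<lambda>m. x (Suc m)) \<longlonglongrightarrow> c" by (rule LIMSEQ_Suc)
    then show ?thesis using r0(3) by (rule_tac bexI)
  qed
  show ?thesis using P1 P2 unfolding x_def S_def CS_def by simp
qed

end
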